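(* Let $R$ be a commutative ring with identity and $a\in R$. Then $$\bigcap_{b\in R} b\Gamma_b(R)\subseteq a\Gamma_a(R)\subseteq S_a(R)\subseteq S(R)=\mathcal{N}(R)\subseteq \operatorname{Rad}(R).$$
   Context: For $b\in R$, $b\Gamma_{b}(R)=\{br \mid r\in R,\ b^{k}r=0 \text{ for some } k\in\mathbb{Z}^{+}\}$. An $R$-module $N$ is $b$-reduced if $b^2n=0$ implies $bn=0$ for $n\in N$, and reduced if it is $b$-reduced for all $b$. A proper ideal $I$ of $R$ is $a$-semiprime (resp. semiprime) if the $R$-module $R/I$ is $a$-reduced (resp. reduced). $S_a(R)$ and $S(R)$ are the intersections of all $a$-semiprime, resp. semiprime, ideals; $\mathcal{N}(R)$ is the set of nilpotent elements of $R$; $\operatorname{Rad}(R)$ is the Jacobson radical. *)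

theory Defs
  imports Main
begin

definition ideal :: "'a::comm_ring_1 set \<Rightarrow> bool" where
  "ideal I \<longleftrightarrow> 0 \<in> I \<and> (\<forall>x\<in>I. \<forall>y\<in>I. x + y \<in> I) \<and> (\<forall>r x. x \<in> I \<longrightarrow> r * x \<in> I)"

definition proper_ideal :: "'a::comm_ring_1 set \<Rightarrow> bool" where
  "proper_ideal I \<longleftrightarrow> ideal I \<and> I \<noteq> UNIV"

definition maximal_ideal :: "'a::comm_ring_1 set \<Rightarrow> bool" where
  "maximal_ideal M \<longleftrightarrow> proper_ideal M \<and> (\<forall>J. proper_ideal J \<and> M \<subseteq> J \<longrightarrow> J = M)"

definition Jacobson_rad :: "'a::comm_ring_1 set" where
  "Jacobson_rad = \<Inter>{M. maximal_ideal M}"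

definition nilradical :: "'a::comm_ring_1 set" where
  "nilradical = {x. \<exists>n. x ^ n = 0}"

definition bGamma :: "'a::comm_ring_1 \<Rightarrow> 'a set" where
  "bGamma b = {b * r | r. \<exists>k::nat. k > 0 \<and> b ^ k * r = 0}"

text \<open>The module R/I is b-reduced: b^2 n = 0 implies b n = 0 in R/I,
  i.e. b^2 r \<in> I implies b r \<in> I.\<close>
definition a_semiprime :: "'a::comm_ring_1 \<Rightarrow> 'a set \<Rightarrow> bool" where
  "a_semiprime a I \<longleftrightarrow> proper_ideal I \<and> (\<forall>r. a ^ 2 * r \<in> I \<longrightarrow> a * r \<in> I)"

definition semiprime :: "'a::comm_ring_1 set \<Rightarrow> bool" where
  "semiprime I \<longleftrightarrow> proper_ideal I \<and> (\<forall>b r. b ^ 2 * r \<in> I \<longrightarrow> b * r \<in> I)"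

definition S_a :: "'a::comm_ring_1 \<Rightarrow> 'a set" where
  "S_a a = \<Inter>{I. a_semiprime a I}"

definition S_all :: "'a::comm_ring_1 set" where
  "S_all = \<Inter>{I. semiprime I}"

end

theory Submission
  imports Defs
begin

lemma nil_add:
  fixes x y :: "'a::comm_ring_1"
  assumes "x ^ m = 0" "y ^ n = 0"
  shows "(x + y) ^ (m + n) = 0"
proof -
  have "(x + y) ^ (m + n) = (\<Sum>k\<le>m+n. of_nat ((m+n) choose k) * x ^ k * y ^ (m + n - k))"
    by (rule binomial_ring)
  also have "\<dots> = 0"
  proof (rule sum.neutral, intro ballI)
    fix k assume "k \<in> {..m+n}"
    show "of_nat ((m+n) choose k) * x ^ k * y ^ (m + n - k) = 0"
    proof (cases "m \<le> k")
      case True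
      then have "x ^ k = x ^ m * x ^ (k - m)" by (simp add: power_add[symmetric])
      then show ?thesis using assms by simp
    next
      case False
      then have "m + n - k = n + (m - k)" by simp
      then have "y ^ (m + n - k) = y ^ n * y ^ (m - k)"
        by (simp add: power_add)
      then show ?thesis using assms by simp
    qed
  qed
  finally show ?thesis .
qed

lemma nil_ideal: "ideal (nilradical :: 'a::comm_ring_1 set)"
  unfolding ideal_def nilradical_def
proof (intro conjI ballI allI impI)
  show "(0::'a) \<in> {x. \<exists>n. x ^ n = 0}" by (rule CollectI, rule exI[of _ 1], simp)
next
  fix x y :: 'a assume "x \<in> {x. \<exists>n. x ^ n = 0}" "y \<in> {x. \<exists>n. x ^ n = 0}"
  then obtain m n where "x ^ m = 0" "y ^ n = 0" by auto
  then show "x + y \<in> {x. \<exists>n. x ^ n = 0}" using nil_add by blast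
next
  fix r x :: 'a assume "x \<in> {x. \<exists>n. x ^ n = 0}"
  then obtain n where "x ^ n = 0" by auto
  then have "(r * x) ^ n = 0" by (simp add: power_mult_distrib)
  then show "r * x \<in> {x. \<exists>n. x ^ n = 0}" by auto
qed

lemma down:
  fixes b :: "'a::comm_ring_1"
  assumes H: "\<And>s. b ^ 2 * s \<in> I \<Longrightarrow> b * s \<in> I"
  shows "b ^ Suc k * r \<in> I \<Longrightarrow> b * r \<in> I"
proof (induction k)
  case 0 then show ?case by simp
next
  case (Suc k)
  have "b ^ 2 * (b ^ k * r) \<in> I" using Suc.prems
    by (simp add: power2_eq_square mult.assoc)
  then have "b * (b ^ k * r) \<in> I" by (rule H)
  then show ?case using Suc.IH by (simp add: mult.assoc)
qed

lemma ideal_one: "ideal I \<Longrightarrow> (1::'a::comm_ring_1) \<in> I \<Longrightarrow> I = UNIV"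
  unfolding ideal_def by (metis UNIV_eq_I mult.right_neutral)

lemma max_contains_nil:
  fixes x :: "'a::comm_ring_1"
  assumes M: "maximal_ideal M" and x: "x ^ n = 0"
  shows "x \<in> M"
proof (rule ccontr)
  assume nx: "x \<notin> M"
  have iM: "ideal M" and pM: "M \<noteq> UNIV" using M unfolding maximal_ideal_def proper_ideal_def by auto
  define J where "J = {m + r * x | m r. m \<in> M}"
  have "ideal J" unfolding ideal_def J_def
  proof (intro conjI allI ballI impI)
    show "0 \<in> {m + r * x |m r. m \<in> M}" using iM unfolding ideal_def by (auto intro!: exI[of _ 0])
  next
    fix u v assume "u \<in> {m + r * x |m r. m \<in> M}" "v \<in> {m + r * x |m r. m \<in> M}"
    then obtain m1 r1 m2 r2 where "u = m1 + r1 * x" "v = m2 + r2 * x" "m1 \<in> M" "m2 \<in> M" by auto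
    moreover have "u + v = (m1 + m2) + (r1 + r2) * x" using calculation by (simp add: algebra_simps)
    moreover have "m1 + m2 \<in> M" using calculation iM unfolding ideal_def by blast
    ultimately show "u + v \<in> {m + r * x |m r. m \<in> M}" by blast
  next
    fix s u assume "u \<in> {m + r * x |m r. m \<in> M}"
    then obtain m1 r1 where "u = m1 + r1 * x" "m1 \<in> M" by auto
    moreover have "s * u = (s * m1) + (s * r1) * x" using calculation by (simp add: algebra_simps)
    moreover have "s * m1 \<in> M" using calculation iM unfolding ideal_def by blast
    ultimately show "s * u \<in> {m + r * x |m r. m \<in> M}" by blast
  qed
  moreover have "M \<subseteq> J" unfolding J_def by (force intro: exI[of _ 0])
  moreover have "x \<in> J" unfolding J_def using iM unfolding ideal_def by (force intro: exI[of _ 1])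
  ultimately have "J = UNIV" using M nx unfolding maximal_ideal_def proper_ideal_def by blast
  then obtain m r where mr: "1 = m + r * x" "m \<in> M" unfolding J_def by blast
  define y where "y = r * x"
  have "1 - y \<in> M" using mr unfolding y_def by (metis add_diff_cancel_right')
  have "1 - y ^ Suc k \<in> M" for k
  proof (induction k)
    case 0 then show ?case using \<open>1 - y \<in> M\<close> by simp
  next
    case (Suc k)
    have "1 - y ^ Suc (Suc k) = (1 - y ^ Suc k) + y ^ Suc k * (1 - y)" by (simp add: algebra_simps)
    then show ?case using Suc.IH \<open>1 - y \<in> M\<close> iM unfolding ideal_def by metis
  qed
  moreover have "y ^ Suc n = 0" unfolding y_def using x by (simp add: power_mult_distrib)
  ultimately have "1 \<in> M" by (metis diff_zero)
  then show False using ideal_one[OF iM] pM by blast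
qed

theorem mainTheorem13:
  fixes a :: "'a::comm_ring_1"
  shows "(\<Inter>b. bGamma b) \<subseteq> bGamma a
         \<and> bGamma a \<subseteq> S_a a
         \<and> S_a a \<subseteq> (S_all :: 'a set)
         \<and> (S_all :: 'a set) = nilradical
         \<and> (nilradical :: 'a set) \<subseteq> Jacobson_rad"
proof (intro conjI)
  show "(\<Inter>b. bGamma b) \<subseteq> bGamma a" by blast
next
  show "bGamma a \<subseteq> S_a a"
  proof
    fix x assume "x \<in> bGamma a"
    then obtain r k where x: "x = a * r" "k > 0" "a ^ k * r = 0" unfolding bGamma_def by auto
    then obtain j where j: "k = Suc j" using not0_implies_Suc by blast
    show "x \<in> S_a a" unfolding S_a_def
    proof
      fix I assume "I \<in> {I. a_semiprime a I}"
      then have H: "\<And>s. a ^ 2 * s \<in> I \<Longrightarrow> a * s \<in> I" and "ideal I"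
        unfolding a_semiprime_def proper_ideal_def by auto
      then have "a ^ Suc j * r \<in> I" using x j unfolding ideal_def by simp
      then show "x \<in> I" using down[OF H] x by blast
    qed
  qed
next
  show "S_a a \<subseteq> S_all" unfolding S_a_def S_all_def a_semiprime_def semiprime_def by blast
next
  show "(S_all :: 'a set) = nilradical"
  proof (rule equalityI)
    show "S_all \<subseteq> (nilradical :: 'a set)"
    proof (cases "nilradical = (UNIV :: 'a set)")
      case True then show ?thesis by simp
    next
      case False
      have "semiprime (nilradical :: 'a set)" unfolding semiprime_def proper_ideal_def
      proof (intro conjI allI impI)
        show "ideal (nilradical :: 'a set)" by (rule nil_ideal)
        show "nilradical \<noteq> (UNIV :: 'a set)" by fact
      next
        fix b r :: 'a assume "b ^ 2 * r \<in> nilradical"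
        then obtain n where "(b ^ 2 * r) ^ n = 0" unfolding nilradical_def by auto
        then have "(b * r) ^ (2 * n) = 0"
        proof -
          have "(b * r) ^ (2 * n) = ((b * r) ^ 2) ^ n" by (simp add: power_mult)
          also have "\<dots> = ((b ^ 2 * r) * r) ^ n" by (simp add: power2_eq_square algebra_simps)
          also have "\<dots> = (b ^ 2 * r) ^ n * r ^ n" by (rule power_mult_distrib)
          finally show ?thesis using \<open>(b ^ 2 * r) ^ n = 0\<close> by simp
        qed
        then show "b * r \<in> nilradical" unfolding nilradical_def by blast
      qed
      then show ?thesis unfolding S_all_def by blast
    qed
  next
    show "(nilradical :: 'a set) \<subseteq> S_all"
    proof
      fix x :: 'a assume "x \<in> nilradical"
      then obtain n where n: "x ^ n = 0" unfolding nilradical_def by auto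
      show "x \<in> S_all" unfolding S_all_def
      proof
        fix I :: "'a set" assume "I \<in> {I. semiprime I}"
        then have H: "\<And>s. x ^ 2 * s \<in> I \<Longrightarrow> x * s \<in> I" and iI: "ideal I"
          unfolding semiprime_def proper_ideal_def by auto
        have "x ^ Suc n * 1 \<in> I" using n iI unfolding ideal_def by simp
        then show "x \<in> I" using down[OF H] by fastforce
      qed
    qed
  qed
next
  show "(nilradical :: 'a set) \<subseteq> Jacobson_rad"
    unfolding Jacobson_rad_def nilradical_def using max_contains_nil by blast
qed

end
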